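(* Let $q$ be an odd prime, $n \geq 1$ an integer, and $v = q^n$. Let $k$ be an odd positive integer. Then there are no integers $a_1, \ldots, a_k$ with $1 \leq a_j < v$ for all $j$ such that $\prod_{j=1}^k a_j = \prod_{j=1}^k (v - a_j)$. *)

theory Defs
  imports Main "HOL-Computational_Algebra.Primes"
begin

end

theory Submission
  imports Defs
begin

lemma decomp:
  fixes p x v :: int and n :: nat
  assumes "prime p" "1 \<le> x" "x < p ^ n"
  shows "\<exists>e b. x = p ^ e * b \<and> \<not> p dvd b \<and> e < n \<and> b > 0"
proof -
  have p1: "p > 1" using assms(1) prime_gt_1_int by blast
  have x0: "x \<noteq> 0" using assms by auto
  have nu: "\<not> is_unit p" using assms(1) by auto
  obtain b where b: "x = p ^ multiplicity p x * b" "\<not> p dvd b"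
    using multiplicity_decompose'[OF x0 nu] by blast
  define e where "e = multiplicity p x"
  have pe: "p ^ e > 0" using p1 by simp
  have bpos: "b > 0"
  proof (rule ccontr)
    assume "\<not> b > 0"
    hence "p ^ e * b \<le> 0" using pe by (simp add: mult_nonneg_nonpos)
    thus False using b(1) assms(2) e_def by simp
  qed
  have "e < n"
  proof (rule ccontr)
    assume "\<not> e < n"
    hence "p ^ n \<le> p ^ e" using p1 by (simp add: power_increasing)
    also have "\<dots> \<le> p ^ e * b" using pe bpos by simp
    finally show False using b(1) e_def assms(3) by simp
  qed
  thus ?thesis using b bpos e_def by blast
qed

theorem lemma4p10:
  fixes q n k :: nat and v :: int
  assumes "prime q" and "odd q" and "n \<ge> 1" and "v = int q ^ n"
    and "odd k" and "k \<ge> 1"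
  shows "\<not> (\<exists>a :: nat \<Rightarrow> int.
            (\<forall>j\<in>{1..k}. 1 \<le> a j \<and> a j < v) \<and>
            (\<Prod>j=1..k. a j) = (\<Prod>j=1..k. v - a j))"
proof
  assume "\<exists>a :: nat \<Rightarrow> int.
            (\<forall>j\<in>{1..k}. 1 \<le> a j \<and> a j < v) \<and>
            (\<Prod>j=1..k. a j) = (\<Prod>j=1..k. v - a j)"
  then obtain a :: "nat \<Rightarrow> int" where ha: "\<forall>j\<in>{1..k}. 1 \<le> a j \<and> a j < v"
    and eq: "(\<Prod>j=1..k. a j) = (\<Prod>j=1..k. v - a j)" by blast
  define p where "p = int q"
  have pp: "prime p" using assms(1) p_def by simp
  have p1: "p > 1" using pp prime_gt_1_int by blast
  have "\<forall>j\<in>{1..k}. \<exists>e b. a j = p ^ e * b \<and> \<not> p dvd b \<and> e < n \<and> b > 0"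
    using decomp[OF pp] ha assms(4) p_def by blast
  then obtain e b where eb: "\<And>j. j\<in>{1..k} \<Longrightarrow> a j = p ^ e j * b j \<and> \<not> p dvd b j \<and> e j < n \<and> b j > 0"
    by metis
  define c where "c j = p ^ (n - e j) - b j" for j
  have vc: "v - a j = p ^ e j * c j" if "j \<in> {1..k}" for j
  proof -
    have "v = p ^ e j * p ^ (n - e j)" using eb[OF that] assms(4) p_def
      by (simp add: power_add[symmetric])
    thus ?thesis using eb[OF that] unfolding c_def by (simp add: algebra_simps)
  qed
  have "(\<Prod>j=1..k. a j) = (\<Prod>j=1..k. p ^ e j) * (\<Prod>j=1..k. b j)"
    using eb by (simp add: prod.distrib[symmetric])
  moreover have "(\<Prod>j=1..k. v - a j) = (\<Prod>j=1..k. p ^ e j) * (\<Prod>j=1..k. c j)"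
    using vc by (simp add: prod.distrib[symmetric])
  moreover have "(\<Prod>j=1..k. p ^ e j) \<noteq> 0" using p1 by simp
  ultimately have bc: "(\<Prod>j=1..k. b j) = (\<Prod>j=1..k. c j)" using eq p1 by simp
  have cm: "c j mod p = (- b j) mod p" if "j \<in> {1..k}" for j
  proof -
    have "p dvd p ^ (n - e j)" using eb[OF that] by simp
    thus ?thesis unfolding c_def by (simp add: mod_diff_left_eq[symmetric] mod_eq_0_iff_dvd)
  qed
  have "(\<Prod>j=1..k. c j) mod p = (\<Prod>j=1..k. - b j) mod p"
    using cm by (metis (no_types, lifting) mod_prod_eq prod.cong)
  also have "(\<Prod>j=1..k. - b j) = (-1) ^ k * (\<Prod>j=1..k. b j)"
    by (simp add: prod_uminus)
  also have "\<dots> = - (\<Prod>j=1..k. b j)" using assms(5) by simp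
  finally have "(\<Prod>j=1..k. b j) mod p = (- (\<Prod>j=1..k. b j)) mod p" using bc by simp
  hence "p dvd (\<Prod>j=1..k. b j) - (- (\<Prod>j=1..k. b j))" by (simp add: mod_eq_dvd_iff)
  hence "p dvd 2 * (\<Prod>j=1..k. b j)" by simp
  hence "p dvd 2 \<or> p dvd (\<Prod>j=1..k. b j)" using pp prime_dvd_mult_iff by blast
  moreover have "\<not> p dvd 2"
  proof
    assume "p dvd 2"
    hence "p \<le> 2" by (simp add: zdvd_imp_le)
    hence "q = 2" using p1 p_def by simp
    thus False using assms(2) by simp
  qed
  moreover have "\<not> p dvd (\<Prod>j=1..k. b j)"
    using pp eb by (simp add: prime_dvd_prod_iff)
  ultimately show False by blast
qed

end
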